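(* Let $(R,\cdot,\mathfrak e)$ be a partial $A$-module algebra. Then the product of the smash product $R\#A$ is left nondegenerate: if $\xi\in R\#A$ satisfies $(x\#a)\xi=0$ for all $x\in R$ and $a\in A$, then $\xi=0$.
   Context: $\Bbbk$ is a field; $M(R)$ is the multiplier algebra of an algebra $R$ with nondegenerate product. $A$ is a regular multiplier Hopf algebra with comultiplication $\Delta$, counit $\varepsilon$, bijective antipode $S$. A partial $A$-module algebra is a triple $(R,\cdot,\mathfrak e)$, $\cdot:A\otimes R\to R$ and $\mathfrak e:A\to M(R)$ linear, such that for all $a,b\in A$, $x,y\in R$: (i) $a\cdot(x(b\cdot y))=(a_{(1)}\cdot x)(a_{(2)}b\cdot y)$; (ii) $\mathfrak e(a)(b\cdot x)=a_{(1)}\cdot(S(a_{(2)})b\cdot x)$ and $\mathfrak e(A)R\subseteq A\cdot R$; (iii) given $a_1,\dots,a_n\in A$, $x_1,\dots,x_m\in R$ there is $b\in A$ with $a_ib=a_i=ba_i$ and $a_i\cdot x_j=a_i\cdot(b\cdot x_j)$; (iv) $A\cdot x=0$ implies $x=0$. The smash product $R\#A$ is the vector space $R\otimes A$ with product $(x\#a)(y\#b)=x(a_{(1)}\cdot y)\#a_{(2)}b$. *)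

theory Defs
  imports Complex_Main
begin

definition k_algebra :: "('k::field \<Rightarrow> 'a::ring \<Rightarrow> 'a) \<Rightarrow> bool" where
  "k_algebra s \<longleftrightarrow> vector_space s \<and>
     (\<forall>c x y. s c (x * y) = s c x * y \<and> s c (x * y) = x * s c y)"

definition nondeg_product :: "('a::ring) itself \<Rightarrow> bool" where
  "nondeg_product _ \<longleftrightarrow>
     (\<forall>a::'a. (\<forall>b. a * b = 0) \<longrightarrow> a = 0) \<and> (\<forall>a::'a. (\<forall>b. b * a = 0) \<longrightarrow> a = 0)"

text \<open>An element of V \<otimes> W is represented by a finite list of pairs (v,w),
 standing for the sum of the elementary tensors v \<otimes> w (scalars are absorbed into
 the first factor). Two representatives are equal in V \<otimes> W iff every bilinear form
 takes the same value on them (over a field, linear functionals separate points of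
 V \<otimes> W, and these are exactly the bilinear forms on V \<times> W).\<close>

definition bilinear_form ::
  "('k::field \<Rightarrow> 'b::ab_group_add \<Rightarrow> 'b) \<Rightarrow> ('k \<Rightarrow> 'c::ab_group_add \<Rightarrow> 'c) \<Rightarrow> ('b \<Rightarrow> 'c \<Rightarrow> 'k) \<Rightarrow> bool" where
  "bilinear_form s1 s2 B \<longleftrightarrow>
     (\<forall>y. Vector_Spaces.linear s1 (*) (\<lambda>x. B x y)) \<and> (\<forall>x. Vector_Spaces.linear s2 (*) (B x))"

definition tensor_eq ::
  "('k::field \<Rightarrow> 'b::ab_group_add \<Rightarrow> 'b) \<Rightarrow> ('k \<Rightarrow> 'c::ab_group_add \<Rightarrow> 'c)
    \<Rightarrow> ('b \<times> 'c) list \<Rightarrow> ('b \<times> 'c) list \<Rightarrow> bool" where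
  "tensor_eq s1 s2 t u \<longleftrightarrow> (\<forall>B. bilinear_form s1 s2 B \<longrightarrow>
      (\<Sum>(x,y)\<leftarrow>t. B x y) = (\<Sum>(x,y)\<leftarrow>u. B x y))"

definition trilinear_form ::
  "('k::field \<Rightarrow> 'b::ab_group_add \<Rightarrow> 'b) \<Rightarrow> ('b \<Rightarrow> 'b \<Rightarrow> 'b \<Rightarrow> 'k) \<Rightarrow> bool" where
  "trilinear_form s B \<longleftrightarrow>
     (\<forall>y z. Vector_Spaces.linear s (*) (\<lambda>x. B x y z)) \<and>
     (\<forall>x z. Vector_Spaces.linear s (*) (\<lambda>y. B x y z)) \<and>
     (\<forall>x y. Vector_Spaces.linear s (*) (\<lambda>z. B x y z))"

definition tensor3_eq ::
  "('k::field \<Rightarrow> 'b::ab_group_add \<Rightarrow> 'b) \<Rightarrow> ('b \<times> 'b \<times> 'b) list \<Rightarrow> ('b \<times> 'b \<times> 'b) list \<Rightarrow> bool" where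
  "tensor3_eq s t u \<longleftrightarrow> (\<forall>B. trilinear_form s B \<longrightarrow>
      (\<Sum>(x,y,z)\<leftarrow>t. B x y z) = (\<Sum>(x,y,z)\<leftarrow>u. B x y z))"

definition tmult :: "('a::ring \<times> 'a) list \<Rightarrow> ('a \<times> 'a) list \<Rightarrow> ('a \<times> 'a) list" where
  "tmult t u = concat (map (\<lambda>(p,q). map (\<lambda>(p',q'). (p * p', q * q')) u) t)"

text \<open>The comultiplication \<Delta> : A \<rightarrow> M(A \<otimes> A) is given by two maps:
 DL a t = \<Delta>(a) t and DR a t = t \<Delta>(a) for t \<in> A \<otimes> A (a multiplier being a pair
 (L,R) with L(tu) = L(t)u, R(tu) = tR(u), tL(u) = R(t)u).\<close>

definition is_multiplier ::
  "('k::field \<Rightarrow> 'a::ring \<Rightarrow> 'a) \<Rightarrow> (('a \<times> 'a) list \<Rightarrow> ('a \<times> 'a) list) \<Rightarrow> (('a \<times> 'a) list \<Rightarrow> ('a \<times> 'a) list) \<Rightarrow> bool" where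
  "is_multiplier s L R \<longleftrightarrow> (\<forall>t u.
      tensor_eq s s (L (tmult t u)) (tmult (L t) u) \<and>
      tensor_eq s s (R (tmult t u)) (tmult t (R u)) \<and>
      tensor_eq s s (tmult t (L u)) (tmult (R t) u))"

definition lm1b :: "'a::ring \<Rightarrow> ('a \<times> 'a) list \<Rightarrow> ('a \<times> 'a) list" where
  "lm1b b t = map (\<lambda>(p,q). (p, b * q)) t"
definition lmb1 :: "'a::ring \<Rightarrow> ('a \<times> 'a) list \<Rightarrow> ('a \<times> 'a) list" where
  "lmb1 b t = map (\<lambda>(p,q). (b * p, q)) t"
definition rm1b :: "'a::ring \<Rightarrow> ('a \<times> 'a) list \<Rightarrow> ('a \<times> 'a) list" where
  "rm1b b t = map (\<lambda>(p,q). (p, q * b)) t"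
definition rmb1 :: "'a::ring \<Rightarrow> ('a \<times> 'a) list \<Rightarrow> ('a \<times> 'a) list" where
  "rmb1 b t = map (\<lambda>(p,q). (p * b, q)) t"

text \<open>Representatives of \<Delta>(a)(1\<otimes>b), (a\<otimes>1)\<Delta>(b), \<Delta>(a)(b\<otimes>1), (1\<otimes>a)\<Delta>(b) in A \<otimes> A
 (a multiplier m lies in A \<otimes> A iff there is u with m t = u t for all t).\<close>
definition D_1b where
  "D_1b s DL a b = (SOME u. \<forall>t. tensor_eq s s (DL a (lm1b b t)) (tmult u t))"
definition D_a1 where
  "D_a1 s DR a b = (SOME u. \<forall>t. tensor_eq s s (DR b (rmb1 a t)) (tmult t u))"
definition D_b1 where
  "D_b1 s DL a b = (SOME u. \<forall>t. tensor_eq s s (DL a (lmb1 b t)) (tmult u t))"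
definition D_1a where
  "D_1a s DR a b = (SOME u. \<forall>t. tensor_eq s s (DR b (rm1b a t)) (tmult t u))"

text \<open>Bijectivity of a bilinear map T : A \<times> A \<rightarrow> A \<otimes> A viewed as a linear map
 A \<otimes> A \<rightarrow> A \<otimes> A.\<close>
definition text_map :: "('a \<Rightarrow> 'a \<Rightarrow> ('a \<times> 'a) list) \<Rightarrow> ('a \<times> 'a) list \<Rightarrow> ('a \<times> 'a) list" where
  "text_map T t = concat (map (\<lambda>(p,q). T p q) t)"

definition tensor_bij :: "('k::field \<Rightarrow> 'a::ring \<Rightarrow> 'a) \<Rightarrow> ('a \<Rightarrow> 'a \<Rightarrow> ('a \<times> 'a) list) \<Rightarrow> bool" where
  "tensor_bij s T \<longleftrightarrow>
     (\<forall>t. tensor_eq s s (text_map T t) [] \<longrightarrow> tensor_eq s s t []) \<and>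
     (\<forall>u. \<exists>t. tensor_eq s s (text_map T t) u)"

definition reg_mult_hopf ::
  "('k::field \<Rightarrow> 'a::ring \<Rightarrow> 'a) \<Rightarrow> ('a \<Rightarrow> ('a \<times> 'a) list \<Rightarrow> ('a \<times> 'a) list)
    \<Rightarrow> ('a \<Rightarrow> ('a \<times> 'a) list \<Rightarrow> ('a \<times> 'a) list) \<Rightarrow> ('a \<Rightarrow> 'k) \<Rightarrow> ('a \<Rightarrow> 'a) \<Rightarrow> bool" where
  "reg_mult_hopf s DL DR eps S \<longleftrightarrow>
     k_algebra s \<and> nondeg_product TYPE('a) \<and>
     \<comment> \<open>\<Delta>(a) is a multiplier of A \<otimes> A\<close>
     (\<forall>a. is_multiplier s (DL a) (DR a)) \<and>
     \<comment> \<open>\<Delta> is linear\<close>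
     (\<forall>a b t. tensor_eq s s (DL (a + b) t) (DL a t @ DL b t) \<and>
              tensor_eq s s (DR (a + b) t) (DR a t @ DR b t)) \<and>
     (\<forall>c a t. tensor_eq s s (DL (s c a) t) (map (\<lambda>(p,q). (s c p, q)) (DL a t)) \<and>
              tensor_eq s s (DR (s c a) t) (map (\<lambda>(p,q). (s c p, q)) (DR a t))) \<and>
     \<comment> \<open>\<Delta> is multiplicative\<close>
     (\<forall>a b t. tensor_eq s s (DL (a * b) t) (DL a (DL b t)) \<and>
              tensor_eq s s (DR (a * b) t) (DR b (DR a t))) \<and>
     \<comment> \<open>\<Delta>(a)(1\<otimes>b), (a\<otimes>1)\<Delta>(b), \<Delta>(a)(b\<otimes>1), (1\<otimes>a)\<Delta>(b) lie in A \<otimes> A\<close>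
     (\<forall>a b. \<exists>u. \<forall>t. tensor_eq s s (DL a (lm1b b t)) (tmult u t)) \<and>
     (\<forall>a b. \<exists>u. \<forall>t. tensor_eq s s (DR b (rmb1 a t)) (tmult t u)) \<and>
     (\<forall>a b. \<exists>u. \<forall>t. tensor_eq s s (DL a (lmb1 b t)) (tmult u t)) \<and>
     (\<forall>a b. \<exists>u. \<forall>t. tensor_eq s s (DR b (rm1b a t)) (tmult t u)) \<and>
     \<comment> \<open>coassociativity: (a\<otimes>1\<otimes>1)(\<Delta>\<otimes>\<iota>)(\<Delta>(b)(1\<otimes>c)) = (\<iota>\<otimes>\<Delta>)((a\<otimes>1)\<Delta>(b))(1\<otimes>1\<otimes>c)\<close>
     (\<forall>a b c. tensor3_eq s
        (concat (map (\<lambda>(p,q). map (\<lambda>(u,v). (u,v,q)) (D_a1 s DR a p)) (D_1b s DL b c)))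
        (concat (map (\<lambda>(r,q). map (\<lambda>(u,v). (r,u,v)) (D_1b s DL q c)) (D_a1 s DR a b)))) \<and>
     \<comment> \<open>the maps T1, T2 (multiplier Hopf algebra) and T3, T4 (regularity, i.e. for \<Delta>^op) are bijective\<close>
     tensor_bij s (D_1b s DL) \<and> tensor_bij s (D_a1 s DR) \<and>
     tensor_bij s (D_b1 s DL) \<and> tensor_bij s (D_1a s DR) \<and>
     \<comment> \<open>counit\<close>
     Vector_Spaces.linear s (*) eps \<and>
     (\<forall>a b. (\<Sum>(p,q)\<leftarrow>D_1b s DL a b. s (eps p) q) = a * b) \<and>
     (\<forall>a b. (\<Sum>(p,q)\<leftarrow>D_a1 s DR a b. s (eps q) p) = a * b) \<and>
     \<comment> \<open>antipode\<close>
     Vector_Spaces.linear s s S \<and>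
     (\<forall>a b. (\<Sum>(p,q)\<leftarrow>D_1b s DL a b. S p * q) = s (eps a) b) \<and>
     (\<forall>a b. (\<Sum>(p,q)\<leftarrow>D_a1 s DR a b. p * S q) = s (eps b) a) \<and>
     bij S"

text \<open>The map \<e> : A \<rightarrow> M(R) is given by eL a x = \<e>(a) x and eR a x = x \<e>(a).\<close>

definition partial_module_algebra ::
  "('k::field \<Rightarrow> 'a::ring \<Rightarrow> 'a) \<Rightarrow> ('a \<Rightarrow> ('a \<times> 'a) list \<Rightarrow> ('a \<times> 'a) list)
    \<Rightarrow> ('a \<Rightarrow> ('a \<times> 'a) list \<Rightarrow> ('a \<times> 'a) list) \<Rightarrow> ('a \<Rightarrow> 'a)
    \<Rightarrow> ('k \<Rightarrow> 'r::ring \<Rightarrow> 'r) \<Rightarrow> ('a \<Rightarrow> 'r \<Rightarrow> 'r)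
    \<Rightarrow> ('a \<Rightarrow> 'r \<Rightarrow> 'r) \<Rightarrow> ('a \<Rightarrow> 'r \<Rightarrow> 'r) \<Rightarrow> bool" where
  "partial_module_algebra sA DL DR S sR act eL eR \<longleftrightarrow>
     \<comment> \<open>\<cdot> : A \<otimes> R \<rightarrow> R linear, i.e. bilinear in (a,x)\<close>
     (\<forall>x. Vector_Spaces.linear sA sR (\<lambda>a. act a x)) \<and>
     (\<forall>a. Vector_Spaces.linear sR sR (act a)) \<and>
     \<comment> \<open>\<e> : A \<rightarrow> M(R) linear\<close>
     (\<forall>a x y. eL a (x * y) = eL a x * y \<and> eR a (x * y) = x * eR a y \<and>
              x * eL a y = eR a x * y) \<and>
     (\<forall>x. Vector_Spaces.linear sA sR (\<lambda>a. eL a x) \<and> Vector_Spaces.linear sA sR (\<lambda>a. eR a x)) \<and>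
     \<comment> \<open>(i)\<close>
     (\<forall>a b x y. act a (x * act b y) = (\<Sum>(p,q)\<leftarrow>D_1b sA DL a b. act p x * act q y)) \<and>
     \<comment> \<open>(ii) \<e>(a)(b\<cdot>x) = a_(1)\<cdot>(S(a_(2))b\<cdot>x), where a_(1)\<otimes>S(a_(2))b = (\<iota>\<otimes>S)((1\<otimes>S^-1(b))\<Delta>(a))\<close>
     (\<forall>a b x. eL a (act b x) = (\<Sum>(p,q)\<leftarrow>D_1a sA DR (inv S b) a. act p (act (S q) x))) \<and>
     (\<forall>a x. eL a x \<in> module.span sR {act b y | b y. True}) \<and>
     \<comment> \<open>(iii)\<close>
     (\<forall>As Xs. finite As \<longrightarrow> finite Xs \<longrightarrow>
        (\<exists>b. \<forall>a\<in>As. a * b = a \<and> b * a = a \<and> (\<forall>x\<in>Xs. act a x = act a (act b x)))) \<and>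
     \<comment> \<open>(iv)\<close>
     (\<forall>x. (\<forall>a. act a x = 0) \<longrightarrow> x = 0)"

text \<open>Product on R # A = R \<otimes> A: (x#a)(y#b) = x(a_(1)\<cdot>y) # a_(2)b, where
 a_(1)\<otimes>a_(2)b = \<Delta>(a)(1\<otimes>b); extended bilinearly to formal sums.\<close>
definition smash_mult ::
  "('k::field \<Rightarrow> 'a::ring \<Rightarrow> 'a) \<Rightarrow> ('a \<Rightarrow> ('a \<times> 'a) list \<Rightarrow> ('a \<times> 'a) list)
    \<Rightarrow> ('a \<Rightarrow> 'r::ring \<Rightarrow> 'r) \<Rightarrow> ('r \<times> 'a) list \<Rightarrow> ('r \<times> 'a) list \<Rightarrow> ('r \<times> 'a) list" where
  "smash_mult sA DL act u v = concat (map (\<lambda>((x,a),(y,b)).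
      map (\<lambda>(p,q). (x * act p y, q)) (D_1b sA DL a b)) (List.product u v))"

end

theory Submission
  imports Defs
begin


lemma lin_add: "Vector_Spaces.linear s1 s2 f \<Longrightarrow> f (x + y) = f x + f y"
  by (simp add: Vector_Spaces.linear_iff)
lemma lin_scale: "Vector_Spaces.linear s1 s2 f \<Longrightarrow> f (s1 c x) = s2 c (f x)"
  by (simp add: Vector_Spaces.linear_iff)
lemma lin_zero: "Vector_Spaces.linear s1 s2 f \<Longrightarrow> f 0 = 0"
  by (metis module_hom.zero module_hom_iff_linear)
lemma lin_vs1: "Vector_Spaces.linear s1 s2 f \<Longrightarrow> vector_space s1"
  by (simp add: Vector_Spaces.linear_iff)
lemma lin_vs2: "Vector_Spaces.linear s1 s2 f \<Longrightarrow> vector_space s2"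
  by (simp add: Vector_Spaces.linear_iff)

lemma vs_self: "vector_space ((*) :: 'k::field \<Rightarrow> 'k \<Rightarrow> 'k)"
  by unfold_locales (auto simp: algebra_simps)

lemma lin_sum_list: "Vector_Spaces.linear s1 s2 f \<Longrightarrow> f (sum_list (map h xs)) = sum_list (map (\<lambda>z. f (h z)) xs)"
  by (induction xs) (auto simp: lin_add lin_zero)

lemma lin_comp: "Vector_Spaces.linear s1 s2 f \<Longrightarrow> Vector_Spaces.linear s2 s3 g \<Longrightarrow> Vector_Spaces.linear s1 s3 (\<lambda>x. g (f x))"
  using Vector_Spaces.linear_compose[of s1 s2 f s3 g] by (simp add: o_def)

lemma sum_list_concat_map: "sum_list (map h (concat (map g t))) = sum_list (map (\<lambda>z. sum_list (map h (g z))) t)"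
  by (induction t) auto

lemma sum_list_swap: "(\<Sum>x\<leftarrow>xs. \<Sum>y\<leftarrow>ys. f x y) = (\<Sum>y\<leftarrow>ys. \<Sum>x\<leftarrow>xs. f x (y::'b) :: 'c::comm_monoid_add)"
  by (induction xs) (auto simp: sum_list_addf)

lemma sum_list_sum_swap: "(\<Sum>x\<leftarrow>xs. \<Sum>e\<in>F. f x e) = (\<Sum>e\<in>F. \<Sum>x\<leftarrow>xs. f x e :: 'c::comm_monoid_add)"
  by (induction xs) (auto simp: sum.distrib)

context vector_space begin
lemma separate:
  assumes "v \<noteq> 0"
  shows "\<exists>\<phi>. Vector_Spaces.linear scale (*) \<phi> \<and> \<phi> v \<noteq> 0"
proof -
  have ind: "independent {v}" using assms by simp
  let ?B = "extend_basis {v}"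
  have "independent ?B" "span ?B = UNIV" "v \<in> ?B"
    using ind independent_extend_basis span_extend_basis extend_basis_superset by blast+
  then show ?thesis
    by (intro exI[of _ "\<lambda>w. representation ?B w v"]) (simp add: linear_representation representation_basis)
qed
end



lemma lin_sum_set: "Vector_Spaces.linear s1 s2 f \<Longrightarrow> f (sum g S) = (\<Sum>a\<in>S. f (g a))"
  by (metis module_hom.sum module_hom_iff_linear)

lemma tensor_zero_from_functionals:
  fixes sA :: "'k::field \<Rightarrow> 'a::ab_group_add \<Rightarrow> 'a" and sR :: "'k \<Rightarrow> 'r::ab_group_add \<Rightarrow> 'r"
  assumes vsA: "vector_space sA"
    and H: "\<forall>\<psi>. Vector_Spaces.linear sA (*) \<psi> \<longrightarrow> (\<Sum>(y,b)\<leftarrow>\<xi>. sR (\<psi> b) y) = 0"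
    and B: "bilinear_form sR sA B"
  shows "(\<Sum>(y,b)\<leftarrow>\<xi>. B y b) = 0"
proof -
  interpret A: vector_space sA by (rule vsA)
  define Bas where "Bas = A.extend_basis {}"
  have ind: "A.independent Bas" and sp: "A.span Bas = UNIV"
    unfolding Bas_def using A.independent_extend_basis A.span_extend_basis A.independent_empty by blast+
  define rep where "rep b = A.representation Bas b" for b
  define F where "F = (\<Union>b\<in>snd ` set \<xi>. {e. rep b e \<noteq> 0})"
  have finF: "finite F" unfolding F_def rep_def using A.finite_representation by auto
  have linrep: "Vector_Spaces.linear sA (*) (\<lambda>b. rep b e)" for e
    unfolding rep_def using A.linear_representation[OF ind sp] .
  have decomp: "b = (\<Sum>e\<in>F. sA (rep b e) e)" if "b \<in> snd ` set \<xi>" for b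
  proof -
    have "b = (\<Sum>e | rep b e \<noteq> 0. sA (rep b e) e)"
      unfolding rep_def using A.sum_nonzero_representation_eq[OF ind] sp by simp
    also have "\<dots> = (\<Sum>e\<in>F. sA (rep b e) e)"
      by (rule sum.mono_neutral_left[OF finF]) (use that in \<open>auto simp: F_def\<close>)
    finally show ?thesis .
  qed
  have B1: "Vector_Spaces.linear sR (*) (\<lambda>y. B y b)" for b using B unfolding bilinear_form_def by blast
  have B2: "Vector_Spaces.linear sA (*) (B y)" for y using B unfolding bilinear_form_def by blast
  have "(\<Sum>(y,b)\<leftarrow>\<xi>. B y b) = (\<Sum>(y,b)\<leftarrow>\<xi>. \<Sum>e\<in>F. rep b e * B y e)"
  proof (rule arg_cong[where f=sum_list], rule map_cong[OF refl], clarify)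
    fix y b assume "(y,b) \<in> set \<xi>"
    then have "b \<in> snd ` set \<xi>" by force
    then have "B y b = B y (\<Sum>e\<in>F. sA (rep b e) e)" using decomp by metis
    also have "\<dots> = (\<Sum>e\<in>F. rep b e * B y e)"
      by (simp add: lin_sum_set[OF B2] lin_scale[OF B2])
    finally show "B y b = (\<Sum>e\<in>F. rep b e * B y e)" .
  qed
  also have "\<dots> = (\<Sum>e\<in>F. \<Sum>(y,b)\<leftarrow>\<xi>. rep b e * B y e)"
    using sum_list_sum_swap[where f="\<lambda>z e. rep (snd z) e * B (fst z) e" and xs=\<xi> and F=F]
    by (simp add: split_def)
  also have "\<dots> = (\<Sum>e\<in>F. B (\<Sum>(y,b)\<leftarrow>\<xi>. sR (rep b e) y) e)"
  proof (rule sum.cong[OF refl])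
    fix e
    have "B (\<Sum>(y,b)\<leftarrow>\<xi>. sR (rep b e) y) e = (\<Sum>(y,b)\<leftarrow>\<xi>. B (sR (rep b e) y) e)"
      using lin_sum_list[OF B1[of e], of "\<lambda>(y,b). sR (rep b e) y" \<xi>] by (simp add: split_def)
    also have "\<dots> = (\<Sum>(y,b)\<leftarrow>\<xi>. rep b e * B y e)"
      by (simp add: lin_scale[OF B1] split_def)
    finally show "(\<Sum>(y,b)\<leftarrow>\<xi>. rep b e * B y e) = B (\<Sum>(y,b)\<leftarrow>\<xi>. sR (rep b e) y) e" by simp
  qed
  also have "\<dots> = 0"
    using H linrep by (simp add: lin_zero[OF B1])
  finally show ?thesis .
qed



lemma teq_refl: "tensor_eq s1 s2 t t" by (simp add: tensor_eq_def)
lemma teq_sym: "tensor_eq s1 s2 t u \<Longrightarrow> tensor_eq s1 s2 u t" by (simp add: tensor_eq_def)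
lemma teq_trans: "tensor_eq s1 s2 t u \<Longrightarrow> tensor_eq s1 s2 u v \<Longrightarrow> tensor_eq s1 s2 t v"
  by (simp add: tensor_eq_def)

lemma teq_map:
  assumes f: "Vector_Spaces.linear s1 s1 f" and g: "Vector_Spaces.linear s2 s2 g"
    and "tensor_eq s1 s2 t u"
  shows "tensor_eq s1 s2 (map (\<lambda>(p,q). (f p, g q)) t) (map (\<lambda>(p,q). (f p, g q)) u)"
  unfolding tensor_eq_def
proof (intro allI impI)
  fix B assume B: "bilinear_form s1 s2 B"
  have "bilinear_form s1 s2 (\<lambda>p q. B (f p) (g q))"
    using B unfolding bilinear_form_def using lin_comp[OF f] lin_comp[OF g] by blast
  with assms(3) have "(\<Sum>(x,y)\<leftarrow>t. B (f x) (g y)) = (\<Sum>(x,y)\<leftarrow>u. B (f x) (g y))"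
    unfolding tensor_eq_def by blast
  then show "(\<Sum>(x,y)\<leftarrow>map (\<lambda>(p,q). (f p, g q)) t. B x y) = (\<Sum>(x,y)\<leftarrow>map (\<lambda>(p,q). (f p, g q)) u. B x y)"
    by (simp add: o_def split_def)
qed

lemma lin_lmult: "k_algebra s \<Longrightarrow> Vector_Spaces.linear s s (\<lambda>q. x * q)"
  unfolding k_algebra_def Vector_Spaces.linear_iff by (metis distrib_left)
lemma lin_rmult: "k_algebra s \<Longrightarrow> Vector_Spaces.linear s s (\<lambda>q. q * x)"
  unfolding k_algebra_def Vector_Spaces.linear_iff by (metis distrib_right)
lemma lin_idm: "k_algebra s \<Longrightarrow> Vector_Spaces.linear s s (\<lambda>q. q)"
  unfolding k_algebra_def Vector_Spaces.linear_iff by simp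

lemma tmult_single_left: "tmult [(x,y)] u = map (\<lambda>(p,q). (x*p, y*q)) u"
  by (simp add: tmult_def split_def)
lemma tmult_single_right: "tmult t [(x,y)] = map (\<lambda>(p,q). (p*x, q*y)) t"
  by (induction t) (auto simp: tmult_def)

lemma ID:
  fixes s :: "'k::field \<Rightarrow> 'a::ring \<Rightarrow> 'a"
  assumes ka: "k_algebra s"
    and mult: "\<forall>t u. tensor_eq s s (tmult t (DL u)) (tmult (DR t) u)"
    and spec1: "\<forall>t. tensor_eq s s (DR (rm1b c t)) (tmult t D1)"
    and spec2: "\<forall>t. tensor_eq s s (DL (lm1b b t)) (tmult D2 t)"
    and units: "\<forall>As::'a set. finite As \<longrightarrow> (\<exists>e. \<forall>x\<in>As. x*e = x \<and> e*x = x)"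
  shows "tensor_eq s s (rm1b b D1) (lm1b c D2)"
proof -
  obtain e where e: "\<forall>x\<in>fst ` set D1 \<union> (\<lambda>(p,q). q*b) ` set D1 \<union> fst ` set D2 \<union> (\<lambda>(p,q). c*q) ` set D2. x*e = x \<and> e*x = x"
  proof -
    have "finite (fst ` set D1 \<union> (\<lambda>(p,q). q*b) ` set D1 \<union> fst ` set D2 \<union> (\<lambda>(p,q). c*q) ` set D2)" by simp
    from units[rule_format, OF this] show ?thesis using that by blast
  qed
  define W where "W = DR [(e, e*c)]"
  obtain e2 where e2: "\<forall>x\<in>fst ` set W \<union> fst ` set D2 \<union> snd ` set D2 \<union> {b}. x*e2 = x \<and> e2*x = x"
  proof -
    have "finite (fst ` set W \<union> fst ` set D2 \<union> snd ` set D2 \<union> {b})" by simp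
    from units[rule_format, OF this] show ?thesis using that by blast
  qed
  have s1: "rm1b b D1 = rm1b b (tmult [(e,e)] D1)"
  proof -
    have "(e*p, e*q*b) = (p, q*b)" if "(p,q) \<in> set D1" for p q
    proof -
      have "p \<in> fst ` set D1" "q*b \<in> (\<lambda>(p,q). q*b) ` set D1" using that by force+
      then show ?thesis using e by (simp add: mult.assoc)
    qed
    then show ?thesis unfolding tmult_single_left rm1b_def by (auto intro!: map_cong)
  qed
  have s2: "tensor_eq s s (rm1b b (tmult [(e,e)] D1)) (rm1b b W)"
  proof -
    have "tensor_eq s s (tmult [(e,e)] D1) W"
      using spec1[rule_format, of "[(e,e)]"] unfolding W_def rm1b_def by (simp add: teq_sym)
    then show ?thesis unfolding rm1b_def
      using teq_map[OF lin_idm[OF ka] lin_rmult[OF ka]] by simp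
  qed
  have s3: "rm1b b W = tmult W [(e2,b)]"
  proof -
    have "(p, q*b) = (p*e2, q*b)" if "(p,q) \<in> set W" for p q
    proof -
      have "p \<in> fst ` set W" using that by force
      then show ?thesis using e2 by simp
    qed
    then show ?thesis unfolding tmult_single_right rm1b_def by (auto intro!: map_cong)
  qed
  have s4: "tensor_eq s s (tmult W [(e2,b)]) (tmult [(e, e*c)] (DL [(e2,b)]))"
    unfolding W_def using mult by (simp add: teq_sym)
  have s5: "[(e2,b)] = lm1b b [(e2,e2)]" unfolding lm1b_def using e2 by simp
  have s6: "tensor_eq s s (tmult [(e, e*c)] (DL [(e2,b)])) (tmult [(e, e*c)] (tmult D2 [(e2,e2)]))"
    unfolding tmult_single_left s5
    using teq_map[OF lin_lmult[OF ka] lin_lmult[OF ka] spec2[rule_format]] by simp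
  have s7: "tmult [(e, e*c)] (tmult D2 [(e2,e2)]) = lm1b c D2"
  proof -
    have "(e*(p*e2), e*c*(q*e2)) = (p, c*q)" if "(p,q) \<in> set D2" for p q
    proof -
      have "p \<in> fst ` set D2" "q \<in> snd ` set D2" "c*q \<in> (\<lambda>(p,q). c*q) ` set D2" using that by force+
      then show ?thesis using e e2 by (simp add: mult.assoc)
    qed
    then show ?thesis unfolding tmult_single_left tmult_single_right lm1b_def by (auto intro!: map_cong)
  qed
  show ?thesis
  proof -
    have "tensor_eq s s (rm1b b W) (lm1b c D2)"
      unfolding s3 using teq_trans[OF s4 s6] s7 by simp
    then show ?thesis unfolding s1 using teq_trans[OF s2] by blast
  qed
qed



lemma lin_sum_list_fun:
  assumes "vector_space s1" "vector_space s2" "\<forall>z\<in>set xs. Vector_Spaces.linear s1 s2 (F z)"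
  shows "Vector_Spaces.linear s1 s2 (\<lambda>p. \<Sum>z\<leftarrow>xs. F z p)"
  using assms(3)
proof (induction xs)
  case Nil then show ?case using assms(1,2) module.scale_zero_right[OF assms(2)[unfolded module_iff_vector_space[symmetric]]]
    by (simp add: Vector_Spaces.linear_iff)
next
  case (Cons a xs)
  then have "Vector_Spaces.linear s1 s2 (F a)" "Vector_Spaces.linear s1 s2 (\<lambda>p. \<Sum>z\<leftarrow>xs. F z p)" by auto
  then show ?case by (simp add: Vector_Spaces.linear_iff algebra_simps module.scale_right_distrib[OF assms(2)[unfolded module_iff_vector_space[symmetric]]])
qed

lemma smash_sum:
  "(\<Sum>(u,v)\<leftarrow>smash_mult sA DL act [(x,a)] \<xi>. G u v) = (\<Sum>(y,b)\<leftarrow>\<xi>. \<Sum>(p,q)\<leftarrow>D_1b sA DL a b. G (x * act p y) q)"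
  unfolding smash_mult_def by (simp add: sum_list_concat_map split_def o_def)



theorem mainTheorem14:
  fixes sA :: "'k::field \<Rightarrow> 'a::ring \<Rightarrow> 'a"
    and DL DR :: "'a \<Rightarrow> ('a \<times> 'a) list \<Rightarrow> ('a \<times> 'a) list"
    and eps :: "'a \<Rightarrow> 'k" and S :: "'a \<Rightarrow> 'a"
    and sR :: "'k \<Rightarrow> 'r::ring \<Rightarrow> 'r"
    and act eL eR :: "'a \<Rightarrow> 'r \<Rightarrow> 'r"
    and \<xi> :: "('r \<times> 'a) list"
  assumes "reg_mult_hopf sA DL DR eps S"
    and "k_algebra sR" and "nondeg_product TYPE('r)"
    and "partial_module_algebra sA DL DR S sR act eL eR"
    and "\<forall>x a. tensor_eq sR sA (smash_mult sA DL act [(x, a)] \<xi>) []"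
  shows "tensor_eq sR sA \<xi> []"
proof -
  note hopf = assms(1)[unfolded reg_mult_hopf_def]
  note pma = assms(4)[unfolded partial_module_algebra_def]
  have kA: "k_algebra sA" using hopf by (elim conjE) assumption
  have kR: "k_algebra sR" by (rule assms(2))
  have vsA: "vector_space sA" using kA k_algebra_def by blast
  have vsR: "vector_space sR" using kR k_algebra_def by blast
  have mm: "\<forall>a. is_multiplier sA (DL a) (DR a)" using hopf by (elim conjE) assumption
  have multA: "\<forall>t u. tensor_eq sA sA (tmult t (DL a u)) (tmult (DR a t) u)" for a
    using mm unfolding is_multiplier_def by blast
  have ex1a: "\<forall>a b. \<exists>u. \<forall>t. tensor_eq sA sA (DL a (lm1b b t)) (tmult u t)" using hopf by (elim conjE) assumption
  have ex4a: "\<forall>a b. \<exists>u. \<forall>t. tensor_eq sA sA (DR b (rm1b a t)) (tmult t u)" using hopf by (elim conjE) assumption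
  have ex1: "\<exists>u. \<forall>t. tensor_eq sA sA (DL a (lm1b b t)) (tmult u t)" for a b using ex1a by blast
  have ex4: "\<exists>u. \<forall>t. tensor_eq sA sA (DR b (rm1b a t)) (tmult t u)" for a b using ex4a by blast
  have spec1: "\<forall>t. tensor_eq sA sA (DL a (lm1b b t)) (tmult (D_1b sA DL a b) t)" for a b
    unfolding D_1b_def by (rule someI_ex[OF ex1])
  have spec4: "\<forall>t. tensor_eq sA sA (DR a (rm1b c t)) (tmult t (D_1a sA DR c a))" for a c
    unfolding D_1a_def by (rule someI_ex[OF ex4])
  have "tensor_bij sA (D_1a sA DR)" using hopf by (elim conjE) assumption
  then have T4: "\<forall>u. \<exists>t. tensor_eq sA sA (text_map (D_1a sA DR) t) u"
    unfolding tensor_bij_def by blast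
  have actAa: "\<forall>x. Vector_Spaces.linear sA sR (\<lambda>a. act a x)" using pma by (elim conjE) assumption
  have actRa: "\<forall>a. Vector_Spaces.linear sR sR (act a)" using pma by (elim conjE) assumption
  have actA: "Vector_Spaces.linear sA sR (\<lambda>a. act a x)" for x using actAa by blast
  have actR: "Vector_Spaces.linear sR sR (act a)" for a using actRa by blast
  have units0: "\<forall>As Xs. finite As \<longrightarrow> finite Xs \<longrightarrow>
        (\<exists>b. \<forall>a\<in>As. a * b = a \<and> b * a = a \<and> (\<forall>x\<in>Xs. act a x = act a (act b x)))"
    using pma by (elim conjE) assumption
  have units: "\<forall>As::'a set. finite As \<longrightarrow> (\<exists>e. \<forall>x\<in>As. x*e = x \<and> e*x = x)"
  proof (intro allI impI)
    fix As :: "'a set" assume "finite As"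
    from units0[rule_format, OF this finite.emptyI] show "\<exists>e. \<forall>x\<in>As. x*e = x \<and> e*x = x" by blast
  qed
  have iv: "\<forall>x. (\<forall>a. act a x = 0) \<longrightarrow> x = 0" using pma by (elim conjE) assumption
  have ndR: "\<forall>a::'r. (\<forall>b. b * a = 0) \<longrightarrow> a = 0" using assms(3) unfolding nondeg_product_def by blast
  have ID': "tensor_eq sA sA (rm1b b (D_1a sA DR c a)) (lm1b c (D_1b sA DL a b))" for a b c
    by (rule ID[OF kA multA spec4 spec1 units])
  have H: "(\<Sum>(y,b)\<leftarrow>\<xi>. \<Sum>(p,q)\<leftarrow>D_1b sA DL a b. B (x * act p y) q) = 0"
    if "bilinear_form sR sA B" for B x a
    using assms(5) that unfolding tensor_eq_def by (simp add: smash_sum[symmetric])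
  have step1: "(\<Sum>(y,b)\<leftarrow>\<xi>. B (x * act e y) (f*b)) = 0" if B: "bilinear_form sR sA B" for B x e f
  proof -
    obtain t where tt: "tensor_eq sA sA (text_map (D_1a sA DR) t) [(e,f)]" using T4 by blast
    define \<Gamma> where "\<Gamma> p q = (\<Sum>(y,b)\<leftarrow>\<xi>. B (x * act p y) (q*b))" for p q
    have B1: "Vector_Spaces.linear sR (*) (\<lambda>r. B r q)" for q using B unfolding bilinear_form_def by blast
    have B2: "Vector_Spaces.linear sA (*) (B r)" for r using B unfolding bilinear_form_def by blast
    have Bl1: "Vector_Spaces.linear sA (*) (\<lambda>p. B (x * act p y) q)" for y q
      using lin_comp[OF lin_comp[OF actA lin_lmult[OF kR]] B1] .
    have Bl2: "Vector_Spaces.linear sA (*) (\<lambda>q. B r (q * b))" for r b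
      using lin_comp[OF lin_rmult[OF kA] B2] .
    have Bl3: "Vector_Spaces.linear sA (*) (\<lambda>q. B r (c * q))" for r c
      using lin_comp[OF lin_lmult[OF kA] B2] .
    have Gbil: "bilinear_form sA sA \<Gamma>"
      unfolding bilinear_form_def \<Gamma>_def split_def
    proof (intro conjI allI)
      fix q show "Vector_Spaces.linear sA (*) (\<lambda>p. \<Sum>z\<leftarrow>\<xi>. B (x * act p (fst z)) (q * snd z))"
        by (rule lin_sum_list_fun[OF vsA vs_self]) (use Bl1 in blast)
    next
      fix p show "Vector_Spaces.linear sA (*) (\<lambda>q. \<Sum>z\<leftarrow>\<xi>. B (x * act p (fst z)) (q * snd z))"
        by (rule lin_sum_list_fun[OF vsA vs_self]) (use Bl2 in blast)
    qed
    have Bybil: "bilinear_form sA sA (\<lambda>p q. B (x * act p y) q)" for y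
      unfolding bilinear_form_def using Bl1 B2 by blast
    have Bcbil: "bilinear_form sR sA (\<lambda>r q. B r (c * q))" for c
      unfolding bilinear_form_def using B1 Bl3 lin_comp[OF _ B1] by blast
    have inner: "(\<Sum>(p,q)\<leftarrow>D_1a sA DR c a. \<Gamma> p q) = 0" for c a
    proof -
      have "(\<Sum>(p,q)\<leftarrow>D_1a sA DR c a. \<Gamma> p q)
          = (\<Sum>(y,b)\<leftarrow>\<xi>. \<Sum>(p,q)\<leftarrow>D_1a sA DR c a. B (x * act p y) (q*b))"
        unfolding \<Gamma>_def using sum_list_swap[where f="\<lambda>z w. B (x * act (fst z) (fst w)) (snd z * snd w)"
            and xs="D_1a sA DR c a" and ys=\<xi>]
        by (simp add: split_def)
      also have "\<dots> = (\<Sum>(y,b)\<leftarrow>\<xi>. \<Sum>(p,q)\<leftarrow>rm1b b (D_1a sA DR c a). B (x * act p y) q)"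
        unfolding rm1b_def by (simp add: split_def o_def)
      also have "\<dots> = (\<Sum>(y,b)\<leftarrow>\<xi>. \<Sum>(p,q)\<leftarrow>lm1b c (D_1b sA DL a b). B (x * act p y) q)"
      proof (rule arg_cong[where f=sum_list], rule map_cong[OF refl], clarify)
        fix y b
        show "(\<Sum>(p,q)\<leftarrow>rm1b b (D_1a sA DR c a). B (x * act p y) q) = (\<Sum>(p,q)\<leftarrow>lm1b c (D_1b sA DL a b). B (x * act p y) q)"
          using ID'[of b c a, unfolded tensor_eq_def] Bybil[of y] by blast
      qed
      also have "\<dots> = (\<Sum>(y,b)\<leftarrow>\<xi>. \<Sum>(p,q)\<leftarrow>D_1b sA DL a b. B (x * act p y) (c*q))"
        unfolding lm1b_def by (simp add: split_def o_def)
      also have "\<dots> = 0"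
        using H[OF Bcbil] by simp
      finally show ?thesis .
    qed
    have "(\<Sum>(p,q)\<leftarrow>text_map (D_1a sA DR) t. \<Gamma> p q) = (\<Sum>(p,q)\<leftarrow>[(e,f)]. \<Gamma> p q)"
      using tt Gbil unfolding tensor_eq_def by blast
    moreover have "(\<Sum>(p,q)\<leftarrow>text_map (D_1a sA DR) t. \<Gamma> p q) = 0"
      unfolding text_map_def using inner by (simp add: sum_list_concat_map split_def)
    ultimately show ?thesis unfolding \<Gamma>_def by simp
  qed
  have step2: "(\<Sum>(y,b)\<leftarrow>\<xi>. B (x * act e y) b) = 0" if B: "bilinear_form sR sA B" for B x e
  proof -
    obtain f where f: "\<forall>b\<in>snd ` set \<xi>. b*f = b \<and> f*b = b"
      using units by (meson finite_imageI finite_set)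
    have "(\<Sum>(y,b)\<leftarrow>\<xi>. B (x * act e y) b) = (\<Sum>(y,b)\<leftarrow>\<xi>. B (x * act e y) (f*b))"
    proof (rule arg_cong[where f=sum_list], rule map_cong[OF refl], clarify)
      fix y b assume "(y,b) \<in> set \<xi>"
      then have "b \<in> snd ` set \<xi>" by force
      then have "f*b = b" using f by blast
      then show "B (x * act e y) b = B (x * act e y) (f*b)" by simp
    qed
    then show ?thesis using step1[OF B] by simp
  qed
  have step3: "(\<Sum>(y,b)\<leftarrow>\<xi>. sR (\<psi> b) y) = 0" if psi: "Vector_Spaces.linear sA (*) \<psi>" for \<psi>
  proof -
    define v where "v = (\<Sum>(y,b)\<leftarrow>\<xi>. sR (\<psi> b) y)"
    have "x * act e v = 0" for x e
    proof (rule ccontr)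
      assume ne: "x * act e v \<noteq> 0"
      obtain \<phi> where phi: "Vector_Spaces.linear sR (*) \<phi>" "\<phi> (x * act e v) \<noteq> 0"
        using vector_space.separate[OF vsR ne] by blast
      have bil: "bilinear_form sR sA (\<lambda>r b. \<phi> r * \<psi> b)"
        unfolding bilinear_form_def Vector_Spaces.linear_iff
        using phi(1) psi vs_self vsR vsA
        by (auto simp: lin_add lin_scale algebra_simps)
      have lin: "Vector_Spaces.linear sR (*) (\<lambda>z. \<phi> (x * act e z))"
        using lin_comp[OF lin_comp[OF actR lin_lmult[OF kR]] phi(1)] .
      have "\<phi> (x * act e v) = (\<Sum>(y,b)\<leftarrow>\<xi>. \<phi> (x * act e (sR (\<psi> b) y)))"
        unfolding v_def using lin_sum_list[OF lin] by (simp add: split_def)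
      also have "\<dots> = (\<Sum>(y,b)\<leftarrow>\<xi>. \<phi> (x * act e y) * \<psi> b)"
        using lin_scale[OF lin] by (simp add: split_def mult.commute)
      also have "\<dots> = 0" using step2[OF bil] .
      finally show False using phi(2) by simp
    qed
    then have "act e v = 0" for e using ndR by blast
    then show ?thesis unfolding v_def[symmetric] using iv by blast
  qed
  show ?thesis
    unfolding tensor_eq_def
  proof (intro allI impI)
    fix B assume "bilinear_form sR sA B"
    then show "(\<Sum>(x,y)\<leftarrow>\<xi>. B x y) = (\<Sum>(x,y)\<leftarrow>[]. B x y)"
      using tensor_zero_from_functionals[OF vsA, where \<xi>=\<xi> and sR=sR and B=B] step3 by simp
  qed
qed


end
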